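(* Let $\eta>0$, $\theta>0$ with $(\eta,\theta)\in\mathcal{R}$, and let $\delta_*=\frac{u_m^2}{u_m^2+\eta}$ be the value of $\delta$ for which the interior equilibrium passes through the fold point $P=(u_m,v_m)$. Assume $f(u_m,v_m)=0,\ g(u_m,v_m,\delta_* )=0,\ \frac{\partial f}{\partial u}(u_m,v_m)=0$, and $\frac{\partial f}{\partial v}(u_m,v_m)\neq0,\ \frac{\partial^2 f}{\partial u^2}(u_m,v_m)\neq0,\ \frac{\partial g}{\partial u}(u_m,v_m,\delta_* )\neq0,\ \frac{\partial g}{\partial \delta}(u_m,v_m,\delta_* )\neq0.$ Then there exist $\epsilon_0>0$ and $\delta_0>0$ such that for $0<\epsilon<\epsilon_0$ and $|\delta-\delta_*|<\delta_0$ the system $$\frac{du}{dt}=f(u,v),\qquad \frac{dv}{dt}=\epsilon\, g(u,v,\delta)$$ has an equilibrium $P_2$ in a neighbourhood of $P$ which converges to $P$ as $(\epsilon,\delta)\to(0,\delta_* )$. The system undergoes a singular Hopf bifurcation at $$\delta_H(\sqrt{\epsilon})=\delta_*+\mathcal{O}(\epsilon^{5/2}).$$ This Hopf bifurcation is non-degenerate when $A\neq0$; it is supercritical if $A<0$ and subcritical if $A>0$, where $$A=a_{01}a_{20}b_{20}-a_{01}a_{30}b_{10}+a_{11}a_{20}b_{10}.$$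
   Context: The system is $f(u,v)=u(1-u)(u+\theta)(u^2+\eta)-u^2v$ and $g(u,v,\delta)=u^2v-\delta v(u^2+\eta)$, with parameters $\delta,\theta,\eta>0$ and $0<\epsilon\ll1$. It is considered on the first quadrant. Let $\phi(u)=\frac{1}{u}(1-u)(u+\theta)(u^2+\eta)$ for $u>0$. The critical manifold is $M_{20}=\{(u,v):u>0,\ v=\phi(u)\}$. Let $\Gamma=9\theta^2+6\theta+9-24\eta$ and $\Lambda_1=\frac{\eta}{8}\big(\theta^2+\frac{22}{3}\theta+1\big)-\frac{1}{96}\big(3(1+\theta^4)+2(\theta^2+4\eta^2)\big)$, $\Lambda_2=\frac{1-\theta}{288}(3\theta^2+2\theta+3-8\eta)$. Define - $\mathcal{R}_1=\{(\eta,\theta):0<\eta<\theta\le1,\ \frac{\sqrt\Gamma}{3}-3<\theta<1+\frac{\sqrt\Gamma}{3},\ \Gamma>(\Lambda_1/\Lambda_2)^2\}$, - $\mathcal{R}_2=\{(\eta,\theta):0<\eta<1<\theta,\ \frac{\sqrt\Gamma}{3}-3<\theta<1+\frac{\sqrt\Gamma}{3},\ \Gamma<(\Lambda_1/\Lambda_2)^2\}$, - $\mathcal{R}_3=\{(\eta,\theta):0<\theta<1<\eta,\ \frac{\sqrt\Gamma}{3}-3<\theta<1,\ \Gamma>(\Lambda_1/\Lambda_2)^2\}$, and $\mathcal{R}=\mathcal{R}_1\cup\mathcal{R}_2\cup\mathcal{R}_3$. For $(\eta,\theta)\in\mathcal{R}$, $M_{20}$ is S-shaped with exactly two fold points. These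 are $P=(u_m,v_m)$, a local minimum of $\phi$, and $Q=(u_M,v_M)$, a local maximum of $\phi$, with $0<u_m<u_M<1$, $v_m=\phi(u_m)$ and $v_M=\phi(u_M)$. The interior equilibrium is $E_*=(u_*,v_* )$ with $u_*=\sqrt{\delta\eta/(1-\delta)}$ and $v_*=\phi(u_* )$. Notation: $a_{ij}=\frac{\partial^{i+j}f}{\partial u^i\partial v^j}(u_m,v_m)$ and $b_{ij}=\frac{\partial^{i+j}g}{\partial u^i\partial v^j}(u_m,v_m,\delta_* )$. A singular Hopf bifurcation is a Hopf bifurcation of an equilibrium near a fold point of the critical manifold at which the eigenvalues of the Jacobian become singular in the limit $\epsilon\to0$. *)

theory Defs
  imports "HOL-Analysis.Analysis" "HOL-Library.Landau_Symbols"
begin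

definition fm :: "real \<Rightarrow> real \<Rightarrow> real \<Rightarrow> real \<Rightarrow> real" where
  "fm \<theta> \<eta> u v = u * (1 - u) * (u + \<theta>) * (u^2 + \<eta>) - u^2 * v"

definition gm :: "real \<Rightarrow> real \<Rightarrow> real \<Rightarrow> real \<Rightarrow> real" where
  "gm \<eta> u v \<delta> = u^2 * v - \<delta> * v * (u^2 + \<eta>)"

definition field :: "real \<Rightarrow> real \<Rightarrow> real \<Rightarrow> real \<Rightarrow> real \<Rightarrow> real \<Rightarrow> real \<times> real" where
  "field \<theta> \<eta> \<epsilon> \<delta> u v = (fm \<theta> \<eta> u v, \<epsilon> * gm \<eta> u v \<delta>)"

definition phi :: "real \<Rightarrow> real \<Rightarrow> real \<Rightarrow> real" where
  "phi \<theta> \<eta> u = (1 / u) * (1 - u) * (u + \<theta>) * (u^2 + \<eta>)"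

text \<open>The fold point P: the local minimum of phi on (0,1) (the lower fold of M20).\<close>
definition u_m :: "real \<Rightarrow> real \<Rightarrow> real" where
  "u_m \<theta> \<eta> = (THE u. 0 < u \<and> u < 1 \<and> deriv (phi \<theta> \<eta>) u = 0 \<and>
      (\<exists>r>0. \<forall>x. 0 < x \<and> \<bar>x - u\<bar> < r \<longrightarrow> phi \<theta> \<eta> u \<le> phi \<theta> \<eta> x))"

definition v_m :: "real \<Rightarrow> real \<Rightarrow> real" where
  "v_m \<theta> \<eta> = phi \<theta> \<eta> (u_m \<theta> \<eta>)"

definition Gam :: "real \<Rightarrow> real \<Rightarrow> real" where
  "Gam \<eta> \<theta> = 9*\<theta>^2 + 6*\<theta> + 9 - 24*\<eta>"

definition Lam1 :: "real \<Rightarrow> real \<Rightarrow> real" where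
  "Lam1 \<eta> \<theta> = \<eta>/8 * (\<theta>^2 + 22/3*\<theta> + 1) - 1/96 * (3*(1 + \<theta>^4) + 2*(\<theta>^2 + 4*\<eta>^2))"

definition Lam2 :: "real \<Rightarrow> real \<Rightarrow> real" where
  "Lam2 \<eta> \<theta> = (1 - \<theta>)/288 * (3*\<theta>^2 + 2*\<theta> + 3 - 8*\<eta>)"

definition R1 :: "(real \<times> real) set" where
  "R1 = {(\<eta>,\<theta>). 0 < \<eta> \<and> \<eta> < \<theta> \<and> \<theta> \<le> 1 \<and>
      sqrt (Gam \<eta> \<theta>)/3 - 3 < \<theta> \<and> \<theta> < 1 + sqrt (Gam \<eta> \<theta>)/3 \<and>
      Lam2 \<eta> \<theta> \<noteq> 0 \<and> Gam \<eta> \<theta> > (Lam1 \<eta> \<theta> / Lam2 \<eta> \<theta>)^2}"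

definition R2 :: "(real \<times> real) set" where
  "R2 = {(\<eta>,\<theta>). 0 < \<eta> \<and> \<eta> < 1 \<and> 1 < \<theta> \<and>
      sqrt (Gam \<eta> \<theta>)/3 - 3 < \<theta> \<and> \<theta> < 1 + sqrt (Gam \<eta> \<theta>)/3 \<and>
      Lam2 \<eta> \<theta> \<noteq> 0 \<and> Gam \<eta> \<theta> < (Lam1 \<eta> \<theta> / Lam2 \<eta> \<theta>)^2}"

definition R3 :: "(real \<times> real) set" where
  "R3 = {(\<eta>,\<theta>). 0 < \<theta> \<and> \<theta> < 1 \<and> 1 < \<eta> \<and>
      sqrt (Gam \<eta> \<theta>)/3 - 3 < \<theta> \<and> \<theta> < 1 \<and>
      Lam2 \<eta> \<theta> \<noteq> 0 \<and> Gam \<eta> \<theta> > (Lam1 \<eta> \<theta> / Lam2 \<eta> \<theta>)^2}"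

definition Rreg :: "(real \<times> real) set" where
  "Rreg = R1 \<union> R2 \<union> R3"

definition pd :: "nat \<Rightarrow> (real \<Rightarrow> real \<Rightarrow> real) \<Rightarrow> real \<Rightarrow> real \<Rightarrow> real" where
  "pd j h = (if j = 0 then (\<lambda>u v. deriv (\<lambda>x. h x v) u) else (\<lambda>u v. deriv (\<lambda>y. h u y) v))"

definition comp :: "(real \<Rightarrow> real \<Rightarrow> real \<times> real) \<Rightarrow> nat \<Rightarrow> real \<Rightarrow> real \<Rightarrow> real" where
  "comp F i = (\<lambda>u v. if i = 0 then fst (F u v) else snd (F u v))"

definition jac :: "(real \<Rightarrow> real \<Rightarrow> real \<times> real) \<Rightarrow> real \<times> real \<Rightarrow> nat \<Rightarrow> nat \<Rightarrow> real" where
  "jac F x i j = pd j (comp F i) (fst x) (snd x)"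

definition jtrace :: "(real \<Rightarrow> real \<Rightarrow> real \<times> real) \<Rightarrow> real \<times> real \<Rightarrow> real" where
  "jtrace F x = jac F x 0 0 + jac F x 1 1"

definition jdet :: "(real \<Rightarrow> real \<Rightarrow> real \<times> real) \<Rightarrow> real \<times> real \<Rightarrow> real" where
  "jdet F x = jac F x 0 0 * jac F x 1 1 - jac F x 0 1 * jac F x 1 0"

text \<open>Imaginary part omega of the eigenvalues +-i omega at a Hopf point (trace 0, det > 0).\<close>
definition hopf_freq :: "(real \<Rightarrow> real \<Rightarrow> real \<times> real) \<Rightarrow> real \<times> real \<Rightarrow> real" where
  "hopf_freq F x = sqrt (jdet F x)"

text \<open>A one-parameter family F mu of planar fields with an equilibrium branch x mu undergoes
  a Hopf bifurcation at mu0: equilibria near mu0, a pair of purely imaginary nonzero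
  eigenvalues at mu0, and the real part of the eigenvalues (= trace/2) crosses zero with
  nonzero speed.\<close>
definition hopf_point :: "(real \<Rightarrow> real \<Rightarrow> real \<Rightarrow> real \<times> real) \<Rightarrow> (real \<Rightarrow> real \<times> real) \<Rightarrow> real \<Rightarrow> bool" where
  "hopf_point F x \<mu>0 \<longleftrightarrow>
     (\<exists>r>0. \<forall>\<mu>. \<bar>\<mu> - \<mu>0\<bar> < r \<longrightarrow> F \<mu> (fst (x \<mu>)) (snd (x \<mu>)) = (0, 0)) \<and>
     jtrace (F \<mu>0) (x \<mu>0) = 0 \<and> jdet (F \<mu>0) (x \<mu>0) > 0 \<and>
     (\<exists>d. d \<noteq> 0 \<and> ((\<lambda>\<mu>. jtrace (F \<mu>) (x \<mu>)) has_real_derivative d) (at \<mu>0))"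

definition cinner :: "(nat \<Rightarrow> complex) \<Rightarrow> (nat \<Rightarrow> complex) \<Rightarrow> complex" where
  "cinner p q = (\<Sum>j<2. cnj (p j) * q j)"

definition cmatvec :: "(nat \<Rightarrow> nat \<Rightarrow> complex) \<Rightarrow> (nat \<Rightarrow> complex) \<Rightarrow> nat \<Rightarrow> complex" where
  "cmatvec M z = (\<lambda>i. \<Sum>j<2. M i j * z j)"

definition csolve :: "(nat \<Rightarrow> nat \<Rightarrow> complex) \<Rightarrow> (nat \<Rightarrow> complex) \<Rightarrow> nat \<Rightarrow> complex" where
  "csolve M z = (let D = M 0 0 * M 1 1 - M 0 1 * M 1 0 in
     (\<lambda>i. if i = 0 then (M 1 1 * z 0 - M 0 1 * z 1) / D else (M 0 0 * z 1 - M 1 0 * z 0) / D))"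

definition Bform :: "(real \<Rightarrow> real \<Rightarrow> real \<times> real) \<Rightarrow> real \<times> real \<Rightarrow> (nat \<Rightarrow> complex) \<Rightarrow> (nat \<Rightarrow> complex) \<Rightarrow> nat \<Rightarrow> complex" where
  "Bform F x a b = (\<lambda>i. \<Sum>j<2. \<Sum>k<2.
      of_real (pd j (pd k (comp F i)) (fst x) (snd x)) * a j * b k)"

definition Cform :: "(real \<Rightarrow> real \<Rightarrow> real \<times> real) \<Rightarrow> real \<times> real \<Rightarrow> (nat \<Rightarrow> complex) \<Rightarrow> (nat \<Rightarrow> complex) \<Rightarrow> (nat \<Rightarrow> complex) \<Rightarrow> nat \<Rightarrow> complex" where
  "Cform F x a b c = (\<lambda>i. \<Sum>j<2. \<Sum>k<2. \<Sum>l<2.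
      of_real (pd j (pd k (pd l (comp F i))) (fst x) (snd x)) * a j * b k * c l)"

text \<open>First Lyapunov coefficient (Kuznetsov, Elements of Applied Bifurcation Theory, (3.20)) of the
  planar field F at an equilibrium x with eigenvalues +-i omega, omega > 0; q, p are normalised
  by <q,q> = 1, <p,q> = 1 (then l1 does not depend on the remaining choice).\<close>
definition lyap1 :: "(real \<Rightarrow> real \<Rightarrow> real \<times> real) \<Rightarrow> real \<times> real \<Rightarrow> real" where
  "lyap1 F x = (let
      \<omega> = hopf_freq F x;
      A = (\<lambda>i j. complex_of_real (jac F x i j));
      AT = (\<lambda>i j. A j i);
      (q, p) = (SOME (q, p). cmatvec A q = (\<lambda>i. \<i> * of_real \<omega> * q i) \<and>
                            cmatvec AT p = (\<lambda>i. - \<i> * of_real \<omega> * p i) \<and>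
                            cinner q q = 1 \<and> cinner p q = 1);
      qb = (\<lambda>i. cnj (q i));
      M2 = (\<lambda>i j. (if i = j then 2 * \<i> * of_real \<omega> else 0) - A i j)
    in Re (cinner p (Cform F x q q qb)
           - 2 * cinner p (Bform F x q (csolve A (Bform F x q qb)))
           + cinner p (Bform F x qb (csolve M2 (Bform F x q q)))) / (2 * \<omega>))"

definition delta_star :: "real \<Rightarrow> real \<Rightarrow> real" where
  "delta_star \<theta> \<eta> = (u_m \<theta> \<eta>)^2 / ((u_m \<theta> \<eta>)^2 + \<eta>)"

text \<open>a_ij = d^(i+j) f / du^i dv^j (u_m, v_m), b_ij likewise for g(., ., delta_star).\<close>
definition pdn :: "nat \<Rightarrow> nat \<Rightarrow> (real \<Rightarrow> real \<Rightarrow> real) \<Rightarrow> real \<Rightarrow> real \<Rightarrow> real" where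
  "pdn i j h = ((pd 0) ^^ i) (((pd 1) ^^ j) h)"

definition acoef :: "real \<Rightarrow> real \<Rightarrow> nat \<Rightarrow> nat \<Rightarrow> real" where
  "acoef \<theta> \<eta> i j = pdn i j (fm \<theta> \<eta>) (u_m \<theta> \<eta>) (v_m \<theta> \<eta>)"

definition bcoef :: "real \<Rightarrow> real \<Rightarrow> nat \<Rightarrow> nat \<Rightarrow> real" where
  "bcoef \<theta> \<eta> i j = pdn i j (\<lambda>u v. gm \<eta> u v (delta_star \<theta> \<eta>)) (u_m \<theta> \<eta>) (v_m \<theta> \<eta>)"

definition Acoef :: "real \<Rightarrow> real \<Rightarrow> real" where
  "Acoef \<theta> \<eta> = acoef \<theta> \<eta> 0 1 * acoef \<theta> \<eta> 2 0 * bcoef \<theta> \<eta> 2 0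
              - acoef \<theta> \<eta> 0 1 * acoef \<theta> \<eta> 3 0 * bcoef \<theta> \<eta> 1 0
              + acoef \<theta> \<eta> 1 1 * acoef \<theta> \<eta> 2 0 * bcoef \<theta> \<eta> 1 0"

end

theory Submission
  imports Defs
begin


lemma sum2: "(\<Sum>j<(2::nat). f j) = f 0 + f 1"
  by (simp add: numeral_2_eq_2)

lemma core_alg:
  fixes a g w D a20 a11 a30 a21 g20 g11 g21 :: complex and q p :: "nat \<Rightarrow> complex"
  assumes ne: "a \<noteq> 0" "g \<noteq> 0" "D \<noteq> 0"
    and q1: "q 1 = \<i> * w * q 0 / a"
    and p1: "p 1 = - \<i> * w * p 0 / g"
    and cw: "cnj w = w" and ca: "cnj a = a" and cg: "cnj g = g"
  defines "SA \<equiv> (\<lambda>z::nat\<Rightarrow>complex. (\<lambda>i::nat. if i = 0 then z 1 / g else z 0 / a))"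
  defines "SM \<equiv> (\<lambda>z::nat\<Rightarrow>complex. (\<lambda>i::nat. if i = 0 then (2 * \<i> * w * z 0 + a * z 1) / D else (2 * \<i> * w * z 1 + g * z 0) / D))"
  defines "Bm \<equiv> (\<lambda>(x::nat\<Rightarrow>complex) (y::nat\<Rightarrow>complex) i::nat. if i = 0 then a20 * x 0 * y 0 + a11 * (x 0 * y 1 + x 1 * y 0)
                  else g20 * x 0 * y 0 + g11 * (x 0 * y 1 + x 1 * y 0))"
  defines "Cm \<equiv> (\<lambda>(x::nat\<Rightarrow>complex) (y::nat\<Rightarrow>complex) (z::nat\<Rightarrow>complex) i::nat. if i = 0 then a30 * x 0 * y 0 * z 0 + a21 * (x 0 * y 0 * z 1 + x 0 * y 1 * z 0 + x 1 * y 0 * z 0)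
                  else g21 * (x 0 * y 0 * z 1 + x 0 * y 1 * z 0 + x 1 * y 0 * z 0))"
  defines "EE \<equiv> (\<lambda>q p. cinner p (Cm q q (\<lambda>i. cnj (q i)))
           - 2 * cinner p (Bm q (SA (Bm q (\<lambda>i. cnj (q i)))))
           + cinner p (Bm (\<lambda>i. cnj (q i)) (SM (Bm q q))))"
  shows "EE q p = (cnj (p 0) / g) * (q 0 ^ 2 * cnj (q 0) / a ^ 3) *
     EE (\<lambda>i. if i = 0 then a else \<i> * w) (\<lambda>i. if i = 0 then g else - \<i> * w)"
  unfolding EE_def cinner_def SA_def SM_def Bm_def Cm_def sum2 q1 p1
  using ne cw ca cg by (simp add: field_simps power2_eq_square power3_eq_cube)

lemma core_re:
  fixes \<alpha> \<gamma> \<omega> a20 a11 a30 a21 g20 g11 g21 :: real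
  assumes ne: "\<alpha> \<noteq> 0" "\<gamma> \<noteq> 0" "\<omega> \<noteq> 0" and w2: "\<omega>^2 = - (\<alpha>*\<gamma>)"
  defines "a \<equiv> complex_of_real \<alpha>" and "g \<equiv> complex_of_real \<gamma>" and "w \<equiv> complex_of_real \<omega>"
     and "D \<equiv> complex_of_real (- (4*\<omega>^2 + \<alpha>*\<gamma>))"
  defines "SA \<equiv> (\<lambda>z::nat\<Rightarrow>complex. (\<lambda>i::nat. if i = 0 then z 1 / g else z 0 / a))"
  defines "SM \<equiv> (\<lambda>z::nat\<Rightarrow>complex. (\<lambda>i::nat. if i = 0 then (2 * \<i> * w * z 0 + a * z 1) / D else (2 * \<i> * w * z 1 + g * z 0) / D))"
  defines "Bm \<equiv> (\<lambda>(x::nat\<Rightarrow>complex) (y::nat\<Rightarrow>complex) i::nat. if i = 0 then of_real a20 * x 0 * y 0 + of_real a11 * (x 0 * y 1 + x 1 * y 0)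
                  else of_real g20 * x 0 * y 0 + of_real g11 * (x 0 * y 1 + x 1 * y 0))"
  defines "Cm \<equiv> (\<lambda>(x::nat\<Rightarrow>complex) (y::nat\<Rightarrow>complex) (z::nat\<Rightarrow>complex) i::nat. if i = 0 then of_real a30 * x 0 * y 0 * z 0 + of_real a21 * (x 0 * y 0 * z 1 + x 0 * y 1 * z 0 + x 1 * y 0 * z 0)
                  else of_real g21 * (x 0 * y 0 * z 1 + x 0 * y 1 * z 0 + x 1 * y 0 * z 0))"
  defines "EE \<equiv> (\<lambda>q p. cinner p (Cm q q (\<lambda>i. cnj (q i)))
           - 2 * cinner p (Bm q (SA (Bm q (\<lambda>i. cnj (q i)))))
           + cinner p (Bm (\<lambda>i. cnj (q i)) (SM (Bm q q))))"
  shows "Re (EE (\<lambda>i. if i = 0 then a else \<i> * w) (\<lambda>i. if i = 0 then g else - \<i> * w))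
     = \<alpha>^2 * (\<alpha>*\<gamma>*a30 - \<alpha>*a20*g20 - \<gamma>*a11*a20 + \<alpha>*(\<gamma>*g21 - g11*g20))"
proof -
  have D: "D = complex_of_real (3 * (\<alpha>*\<gamma>))" unfolding D_def using w2 by simp
  have dv: "z / complex_of_real r = complex_of_real (1/r) * z" for z r
    by (simp add: divide_complex_def mult.commute)
  show ?thesis
  unfolding EE_def cinner_def SA_def SM_def Bm_def Cm_def sum2 D a_def g_def w_def dv
  apply simp
  using ne w2 apply (simp add: field_simps)
  using w2 apply algebra
  done
qed

lemma wit_q1:
  fixes \<alpha> \<gamma> \<omega> nq :: real
  assumes ne: "\<alpha> \<noteq> 0" and w2: "\<omega>^2 = - (\<alpha>*\<gamma>)"
  shows "cmatvec (\<lambda>i j. complex_of_real (if i = 0 then (if j = 0 then 0 else \<alpha>) else (if j = 0 then \<gamma> else 0)))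
      (\<lambda>i. if i = 0 then complex_of_real nq else \<i> * complex_of_real \<omega> * complex_of_real nq / complex_of_real \<alpha>) =
      (\<lambda>i. \<i> * complex_of_real \<omega> * (if i = 0 then complex_of_real nq else \<i> * complex_of_real \<omega> * complex_of_real nq / complex_of_real \<alpha>))"
proof (rule ext)
  fix i :: nat
  show "cmatvec (\<lambda>i j. complex_of_real (if i = 0 then (if j = 0 then 0 else \<alpha>) else (if j = 0 then \<gamma> else 0)))
      (\<lambda>i. if i = 0 then complex_of_real nq else \<i> * complex_of_real \<omega> * complex_of_real nq / complex_of_real \<alpha>) i =
      \<i> * complex_of_real \<omega> * (if i = 0 then complex_of_real nq else \<i> * complex_of_real \<omega> * complex_of_real nq / complex_of_real \<alpha>)"
  proof (cases "i = 0")
    case True then show ?thesis using ne by (simp add: cmatvec_def sum2)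
  next
    case False
    have e: "\<gamma> * nq = - (\<omega> * \<omega> * nq / \<alpha>)" using ne w2 by (simp add: field_simps power2_eq_square)
    have "complex_of_real \<gamma> * complex_of_real nq = \<i> * complex_of_real \<omega> * (\<i> * complex_of_real \<omega> * complex_of_real nq / complex_of_real \<alpha>)"
      using arg_cong[OF e, of complex_of_real] by (simp add: complex_eq_iff)
    then show ?thesis using False by (simp add: cmatvec_def sum2)
  qed
qed

lemma wit_p1:
  fixes \<alpha> \<gamma> \<omega> nq :: real
  assumes ne: "\<gamma> \<noteq> 0" and w2: "\<omega>^2 = - (\<alpha>*\<gamma>)"
  shows "cmatvec (\<lambda>i j. complex_of_real (if j = 0 then (if i = 0 then 0 else \<alpha>) else (if i = 0 then \<gamma> else 0)))
      (\<lambda>i. if i = 0 then complex_of_real r else - \<i> * complex_of_real \<omega> * complex_of_real r / complex_of_real \<gamma>) =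
      (\<lambda>i. - \<i> * complex_of_real \<omega> * (if i = 0 then complex_of_real r else - \<i> * complex_of_real \<omega> * complex_of_real r / complex_of_real \<gamma>))"
proof (rule ext)
  fix i :: nat
  show "cmatvec (\<lambda>i j. complex_of_real (if j = 0 then (if i = 0 then 0 else \<alpha>) else (if i = 0 then \<gamma> else 0)))
      (\<lambda>i. if i = 0 then complex_of_real r else - \<i> * complex_of_real \<omega> * complex_of_real r / complex_of_real \<gamma>) i =
      - \<i> * complex_of_real \<omega> * (if i = 0 then complex_of_real r else - \<i> * complex_of_real \<omega> * complex_of_real r / complex_of_real \<gamma>)"
  proof (cases "i = 0")
    case True then show ?thesis using ne by (simp add: cmatvec_def sum2)
  next
    case False
    have e: "\<alpha> * r = - (\<omega> * \<omega> * r / \<gamma>)" using ne w2 by (simp add: field_simps power2_eq_square)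
    have "complex_of_real \<alpha> * complex_of_real r = - \<i> * complex_of_real \<omega> * (- \<i> * complex_of_real \<omega> * complex_of_real r / complex_of_real \<gamma>)"
      using arg_cong[OF e, of complex_of_real] by (simp add: complex_eq_iff)
    then show ?thesis using False by (simp add: cmatvec_def sum2)
  qed
qed

lemma wit_qq:
  fixes \<alpha> \<omega> nq :: real
  assumes nqsq: "nq^2 * (\<alpha>^2 + \<omega>^2) = \<alpha>^2" and ne: "\<alpha> \<noteq> 0"
  shows "cinner (\<lambda>i. if i = 0 then complex_of_real nq else \<i> * complex_of_real \<omega> * complex_of_real nq / complex_of_real \<alpha>) (\<lambda>i. if i = 0 then complex_of_real nq else \<i> * complex_of_real \<omega> * complex_of_real nq / complex_of_real \<alpha>) = 1"
proof -
  have "nq * nq + (\<omega> * nq / \<alpha>) * (\<omega> * nq / \<alpha>) = nq^2 * (\<alpha>^2 + \<omega>^2) / \<alpha>^2"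
    using ne by (simp add: field_simps power2_eq_square)
  then have e: "nq * nq + (\<omega> * nq / \<alpha>) * (\<omega> * nq / \<alpha>) = 1" using nqsq ne by simp
  have "cinner (\<lambda>i. if i = 0 then complex_of_real nq else \<i> * complex_of_real \<omega> * complex_of_real nq / complex_of_real \<alpha>) (\<lambda>i. if i = 0 then complex_of_real nq else \<i> * complex_of_real \<omega> * complex_of_real nq / complex_of_real \<alpha>)
         = complex_of_real (nq * nq + (\<omega> * nq / \<alpha>) * (\<omega> * nq / \<alpha>))"
    by (simp add: cinner_def sum2 complex_eq_iff)
  then show ?thesis by (simp only: e of_real_1)
qed

lemma wit_pq:
  fixes \<alpha> \<gamma> \<omega> nq :: real
  assumes "nq \<noteq> 0" "\<alpha> \<noteq> 0" "\<gamma> \<noteq> 0" and w2: "\<omega>^2 = - (\<alpha>*\<gamma>)"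
  shows "cinner (\<lambda>i. if i = 0 then complex_of_real (1/(2 * nq)) else - \<i> * complex_of_real \<omega> * complex_of_real (1/(2 * nq)) / complex_of_real \<gamma>) (\<lambda>i. if i = 0 then complex_of_real nq else \<i> * complex_of_real \<omega> * complex_of_real nq / complex_of_real \<alpha>) = 1"
proof -
  have "(1/(2 * nq)) * nq - (\<omega> * (1/(2 * nq)) / \<gamma>) * (\<omega> * nq / \<alpha>) = 1/2 - \<omega>^2 / (2 * \<alpha> * \<gamma>)"
    using assms by (simp add: field_simps power2_eq_square)
  then have e: "(1/(2 * nq)) * nq - (\<omega> * (1/(2 * nq)) / \<gamma>) * (\<omega> * nq / \<alpha>) = 1" using assms by (simp add: w2)
  have "cinner (\<lambda>i. if i = 0 then complex_of_real (1/(2 * nq)) else - \<i> * complex_of_real \<omega> * complex_of_real (1/(2 * nq)) / complex_of_real \<gamma>) (\<lambda>i. if i = 0 then complex_of_real nq else \<i> * complex_of_real \<omega> * complex_of_real nq / complex_of_real \<alpha>)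
         = complex_of_real ((1/(2 * nq)) * nq - (\<omega> * (1/(2 * nq)) / \<gamma>) * (\<omega> * nq / \<alpha>))"
    by (simp add: cinner_def sum2 complex_eq_iff)
  then show ?thesis by (simp only: e of_real_1)
qed

lemma arith0:
  fixes \<alpha> \<gamma> \<omega> B S :: real
  assumes "\<alpha> \<noteq> 0" "\<gamma> \<noteq> 0" "\<omega> \<noteq> 0" "S \<noteq> 0"
  shows "((1/2) * (\<alpha>^2/S) / (\<gamma> * \<alpha>^3)) * (\<alpha>^2 * B) / (2 * \<omega>) = \<alpha>^2 * B / (4 * \<alpha> * \<gamma> * S * \<omega>)"
  using assms by (simp add: field_simps power2_eq_square power3_eq_cube)

lemma arith1:
  fixes \<alpha> \<gamma> \<omega> B :: real
  assumes "\<alpha> \<noteq> 0" "\<gamma> \<noteq> 0" "\<omega> \<noteq> 0" "\<alpha>^2 + \<omega>^2 \<noteq> 0"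
  shows "((1/2) * (\<alpha>^2/(\<alpha>^2+\<omega>^2)) / (\<gamma> * \<alpha>^3)) * (\<alpha>^2 * B) / (2 * \<omega>) = \<alpha>^2 * B / (4 * \<alpha> * \<gamma> * (\<alpha>^2 + \<omega>^2) * \<omega>)"
  by (rule arith0[OF assms])

lemma lyap1_eval:
  fixes F :: "real \<Rightarrow> real \<Rightarrow> real \<times> real" and x :: "real \<times> real"
    and \<alpha> \<gamma> a20 a11 a30 a21 g20 g11 g21 :: real
  assumes J: "jac F x = (\<lambda>i j. if i = 0 then (if j = 0 then 0 else \<alpha>) else (if j = 0 then \<gamma> else 0))"
    and Bf: "Bform F x = (\<lambda>(x::nat\<Rightarrow>complex) (y::nat\<Rightarrow>complex) i::nat. if i = 0 then of_real a20 * x 0 * y 0 + of_real a11 * (x 0 * y 1 + x 1 * y 0)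
                  else of_real g20 * x 0 * y 0 + of_real g11 * (x 0 * y 1 + x 1 * y 0))"
    and Cf: "Cform F x = (\<lambda>(x::nat\<Rightarrow>complex) (y::nat\<Rightarrow>complex) (z::nat\<Rightarrow>complex) i::nat. if i = 0 then of_real a30 * x 0 * y 0 * z 0 + of_real a21 * (x 0 * y 0 * z 1 + x 0 * y 1 * z 0 + x 1 * y 0 * z 0)
                  else of_real g21 * (x 0 * y 0 * z 1 + x 0 * y 1 * z 0 + x 1 * y 0 * z 0))"
    and neg: "\<alpha> * \<gamma> < 0"
  shows "lyap1 F x = \<alpha>^2 * (\<alpha>*\<gamma>*a30 - \<alpha>*a20*g20 - \<gamma>*a11*a20 + \<alpha>*(\<gamma>*g21 - g11*g20))
             / (4 * \<alpha> * \<gamma> * (\<alpha>^2 + (sqrt (-(\<alpha>*\<gamma>)))^2) * sqrt (-(\<alpha>*\<gamma>)))"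
proof -
  define \<omega> where "\<omega> = sqrt (-(\<alpha>*\<gamma>))"
  have ne: "\<alpha> \<noteq> 0" "\<gamma> \<noteq> 0" using neg by auto
  have wpos: "\<omega> > 0" unfolding \<omega>_def using neg by simp
  have wpos': "\<omega> \<noteq> 0" using wpos by simp
  have w2: "\<omega>^2 = -(\<alpha>*\<gamma>)" unfolding \<omega>_def using neg by simp
  have hf: "hopf_freq F x = \<omega>" unfolding hopf_freq_def jdet_def J \<omega>_def by simp
  define a where "a = complex_of_real \<alpha>"
  define g where "g = complex_of_real \<gamma>"
  define w where "w = complex_of_real \<omega>"
  define D where "D = complex_of_real (- (4*\<omega>^2 + \<alpha>*\<gamma>))"
  have D0: "D \<noteq> 0" unfolding D_def using w2 ne by simp
  have cA: "csolve (\<lambda>i j. complex_of_real (jac F x i j)) z = (\<lambda>i. if i = 0 then z 1 / g else z 0 / a)" for z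
    using ne unfolding J g_def a_def by (auto simp: csolve_def Let_def field_simps)
  have m00: "(if (0::nat) = 0 then 2 * \<i> * complex_of_real \<omega> else 0) - complex_of_real (jac F x 0 0) = 2 * \<i> * complex_of_real \<omega>"
    by (simp add: J)
  have m11: "(if (1::nat) = 1 then 2 * \<i> * complex_of_real \<omega> else 0) - complex_of_real (jac F x 1 1) = 2 * \<i> * complex_of_real \<omega>"
    by (simp add: J)
  have m01: "(if (0::nat) = 1 then 2 * \<i> * complex_of_real \<omega> else 0) - complex_of_real (jac F x 0 1) = - a"
    by (simp add: J a_def)
  have m10: "(if (1::nat) = 0 then 2 * \<i> * complex_of_real \<omega> else 0) - complex_of_real (jac F x 1 0) = - g"
    by (simp add: J g_def)
  have DD: "(2 * \<i> * complex_of_real \<omega>) * (2 * \<i> * complex_of_real \<omega>) - (- a) * (- g) = D"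
    unfolding D_def a_def g_def by (simp add: algebra_simps power2_eq_square)
  have cM: "csolve (\<lambda>i j. (if i = j then 2 * \<i> * complex_of_real \<omega> else 0) - complex_of_real (jac F x i j)) z
      = (\<lambda>i. if i = 0 then (2 * \<i> * w * z 0 + a * z 1) / D else (2 * \<i> * w * z 1 + g * z 0) / D)" for z
    unfolding csolve_def Let_def m00 m11 m01 m10 DD w_def by (rule ext) (simp add: algebra_simps)
  define nq where "nq = \<alpha> / sqrt (\<alpha>^2 + \<omega>^2)"
  have pos: "\<alpha>^2 + \<omega>^2 > 0" using ne(1) by (intro add_pos_nonneg) simp_all
  have sq: "sqrt (\<alpha>^2 + \<omega>^2) > 0" using pos by simp
  have nqne: "nq \<noteq> 0" unfolding nq_def using ne sq by simp
  have nqsq: "nq^2 * (\<alpha>^2 + \<omega>^2) = \<alpha>^2" unfolding nq_def using sq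
    by (simp add: power_divide)
  have ex: "\<exists>qp. case qp of (q, p) \<Rightarrow>
           cmatvec (\<lambda>i j. complex_of_real (jac F x i j)) q = (\<lambda>i. \<i> * complex_of_real \<omega> * q i) \<and>
           cmatvec (\<lambda>i j. complex_of_real (jac F x j i)) p = (\<lambda>i. - \<i> * complex_of_real \<omega> * p i) \<and>
           cinner q q = 1 \<and> cinner p q = 1"
  proof (rule exI[of _ "((\<lambda>i. if i = 0 then complex_of_real nq else \<i> * complex_of_real \<omega> * complex_of_real nq / complex_of_real \<alpha>),
                         (\<lambda>i. if i = 0 then complex_of_real (1/(2 * nq)) else - \<i> * complex_of_real \<omega> * complex_of_real (1/(2 * nq)) / complex_of_real \<gamma>))"], 
         simp only: prod.case, intro conjI)
    show "cmatvec (\<lambda>i j. complex_of_real (jac F x i j)) (\<lambda>i. if i = 0 then complex_of_real nq else \<i> * complex_of_real \<omega> * complex_of_real nq / complex_of_real \<alpha>) =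
      (\<lambda>i. \<i> * complex_of_real \<omega> * (if i = 0 then complex_of_real nq else \<i> * complex_of_real \<omega> * complex_of_real nq / complex_of_real \<alpha>))"
      unfolding J by (rule wit_q1[OF ne(1) w2])
    show "cmatvec (\<lambda>i j. complex_of_real (jac F x j i)) (\<lambda>i. if i = 0 then complex_of_real (1/(2 * nq)) else - \<i> * complex_of_real \<omega> * complex_of_real (1/(2 * nq)) / complex_of_real \<gamma>) =
      (\<lambda>i. - \<i> * complex_of_real \<omega> * (if i = 0 then complex_of_real (1/(2 * nq)) else - \<i> * complex_of_real \<omega> * complex_of_real (1/(2 * nq)) / complex_of_real \<gamma>))"
      unfolding J by (rule wit_p1[OF ne(2) w2])
    show "cinner (\<lambda>i. if i = 0 then complex_of_real nq else \<i> * complex_of_real \<omega> * complex_of_real nq / complex_of_real \<alpha>) (\<lambda>i. if i = 0 then complex_of_real nq else \<i> * complex_of_real \<omega> * complex_of_real nq / complex_of_real \<alpha>) = 1"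
      by (rule wit_qq[OF nqsq ne(1)])
    show "cinner (\<lambda>i. if i = 0 then complex_of_real (1/(2 * nq)) else - \<i> * complex_of_real \<omega> * complex_of_real (1/(2 * nq)) / complex_of_real \<gamma>) (\<lambda>i. if i = 0 then complex_of_real nq else \<i> * complex_of_real \<omega> * complex_of_real nq / complex_of_real \<alpha>) = 1"
      by (rule wit_pq[OF nqne ne w2])
  qed
  have key: "Re (cinner p (Cform F x q q (\<lambda>i. cnj (q i)))
        - 2 * cinner p (Bform F x q (csolve (\<lambda>i j. complex_of_real (jac F x i j)) (Bform F x q (\<lambda>i. cnj (q i)))))
        + cinner p (Bform F x (\<lambda>i. cnj (q i)) (csolve (\<lambda>i j. (if i = j then 2 * \<i> * complex_of_real \<omega> else 0) - complex_of_real (jac F x i j)) (Bform F x q q)))) / (2 * \<omega>)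
     = \<alpha>^2 * (\<alpha>*\<gamma>*a30 - \<alpha>*a20*g20 - \<gamma>*a11*a20 + \<alpha>*(\<gamma>*g21 - g11*g20))
             / (4 * \<alpha> * \<gamma> * (\<alpha>^2 + \<omega>^2) * \<omega>)"
    if H: "cmatvec (\<lambda>i j. complex_of_real (jac F x i j)) q = (\<lambda>i. \<i> * complex_of_real \<omega> * q i)"
      "cmatvec (\<lambda>i j. complex_of_real (jac F x j i)) p = (\<lambda>i. - \<i> * complex_of_real \<omega> * p i)"
      "cinner q q = 1" "cinner p q = 1" for q p
  proof -
    have "complex_of_real \<alpha> * q 1 = \<i> * complex_of_real \<omega> * q 0"
      using fun_cong[OF H(1), of 0] by (simp add: cmatvec_def sum2 J)
    then have q1: "q 1 = \<i> * w * q 0 / a" using ne unfolding w_def a_def by (simp add: field_simps)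
    have "complex_of_real \<gamma> * p 1 = - \<i> * complex_of_real \<omega> * p 0"
      using fun_cong[OF H(2), of 0] by (simp add: cmatvec_def sum2 J)
    then have p1: "p 1 = - \<i> * w * p 0 / g" using ne unfolding w_def g_def by (simp add: field_simps)
    have cq: "cnj (q 0) * q 0 = complex_of_real (\<alpha>^2/(\<alpha>^2+\<omega>^2))"
    proof -
      have "cinner q q = (cnj (q 0) * q 0) * complex_of_real (1 + \<omega>^2/\<alpha>^2)"
        unfolding cinner_def sum2 q1 w_def a_def using ne by (simp add: field_simps power2_eq_square)
      then have "(cnj (q 0) * q 0) * complex_of_real (1 + \<omega>^2/\<alpha>^2) = 1" using H(3) by simp
      moreover have "1 + \<omega>^2/\<alpha>^2 = (\<alpha>^2+\<omega>^2)/\<alpha>^2" using ne by (simp add: field_simps)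
      ultimately have "(cnj (q 0) * q 0) * complex_of_real ((\<alpha>^2+\<omega>^2)/\<alpha>^2) = 1" by simp
      moreover have "(\<alpha>^2+\<omega>^2)/\<alpha>^2 \<noteq> 0" using pos ne by simp
      then have "complex_of_real ((\<alpha>^2+\<omega>^2)/\<alpha>^2) \<noteq> 0" by (simp only: of_real_eq_0_iff not_False_eq_True)
      ultimately have "cnj (q 0) * q 0 = 1 / complex_of_real ((\<alpha>^2+\<omega>^2)/\<alpha>^2)"
        by (simp add: eq_divide_eq)
      also have "1 / complex_of_real ((\<alpha>^2+\<omega>^2)/\<alpha>^2) = complex_of_real (1 / ((\<alpha>^2+\<omega>^2)/\<alpha>^2))"
        by (simp only: of_real_divide of_real_1)
      also have "1 / ((\<alpha>^2+\<omega>^2)/\<alpha>^2) = \<alpha>^2/(\<alpha>^2+\<omega>^2)" by simp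
      finally show ?thesis .
    qed
    have cp: "cnj (p 0) * q 0 = complex_of_real (1/2)"
    proof -
      have "cinner p q = (cnj (p 0) * q 0) * complex_of_real (1 - \<omega>^2/(\<alpha>*\<gamma>))"
        unfolding cinner_def sum2 q1 p1 w_def a_def g_def using ne by (simp add: field_simps power2_eq_square)
      moreover have "1 - \<omega>^2/(\<alpha>*\<gamma>) = 2" using ne w2 by (simp add: field_simps)
      ultimately have "(cnj (p 0) * q 0) * 2 = 1" using H(4) by simp
      then show ?thesis by (simp add: field_simps)
    qed
    have ane: "a \<noteq> 0" "g \<noteq> 0" using ne unfolding a_def g_def by simp_all
    have cc: "cnj w = w" "cnj a = a" "cnj g = g" unfolding w_def a_def g_def by simp_all
    define E0 where "E0 = cinner (\<lambda>i. if i = 0 then g else - \<i> * w) (Cform F x (\<lambda>i. if i = 0 then a else \<i> * w) (\<lambda>i. if i = 0 then a else \<i> * w) (\<lambda>i. cnj (if i = 0 then a else \<i> * w)))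
        - 2 * cinner (\<lambda>i. if i = 0 then g else - \<i> * w) (Bform F x (\<lambda>i. if i = 0 then a else \<i> * w) ((\<lambda>z i. if i = 0 then z 1 / g else z 0 / a) (Bform F x (\<lambda>i. if i = 0 then a else \<i> * w) (\<lambda>i. cnj (if i = 0 then a else \<i> * w)))))
        + cinner (\<lambda>i. if i = 0 then g else - \<i> * w) (Bform F x (\<lambda>i. cnj (if i = 0 then a else \<i> * w)) ((\<lambda>z i. if i = 0 then (2 * \<i> * w * z 0 + a * z 1) / D else (2 * \<i> * w * z 1 + g * z 0) / D) (Bform F x (\<lambda>i. if i = 0 then a else \<i> * w) (\<lambda>i. if i = 0 then a else \<i> * w))))"
    have E: "cinner p (Cform F x q q (\<lambda>i. cnj (q i)))
        - 2 * cinner p (Bform F x q (csolve (\<lambda>i j. complex_of_real (jac F x i j)) (Bform F x q (\<lambda>i. cnj (q i)))))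
        + cinner p (Bform F x (\<lambda>i. cnj (q i)) (csolve (\<lambda>i j. (if i = j then 2 * \<i> * complex_of_real \<omega> else 0) - complex_of_real (jac F x i j)) (Bform F x q q)))
      = (cnj (p 0) / g) * (q 0 ^ 2 * cnj (q 0) / a ^ 3) * 
        E0"
      unfolding cA cM Bf Cf E0_def
      by (rule core_alg[OF ane D0 q1 p1 cc])
    have R: "Re E0 = \<alpha>^2 * (\<alpha>*\<gamma>*a30 - \<alpha>*a20*g20 - \<gamma>*a11*a20 + \<alpha>*(\<gamma>*g21 - g11*g20))"
      unfolding E0_def Bf Cf a_def g_def w_def D_def
      by (rule core_re[OF ne wpos' w2])
    have fac: "(cnj (p 0) / g) * (q 0 ^ 2 * cnj (q 0) / a ^ 3) = (cnj (p 0) * q 0) * (cnj (q 0) * q 0) / (g * a ^ 3)"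
      by (simp add: field_simps power2_eq_square)
    also have "\<dots> = complex_of_real ((1/2) * (\<alpha>^2/(\<alpha>^2+\<omega>^2)) / (\<gamma> * \<alpha>^3))"
      unfolding cp cq a_def g_def by simp
    finally have fac2: "(cnj (p 0) / g) * (q 0 ^ 2 * cnj (q 0) / a ^ 3) = complex_of_real ((1/2) * (\<alpha>^2/(\<alpha>^2+\<omega>^2)) / (\<gamma> * \<alpha>^3))" .
    have "Re (complex_of_real ((1/2) * (\<alpha>^2/(\<alpha>^2+\<omega>^2)) / (\<gamma> * \<alpha>^3)) * E0) / (2 * \<omega>)
       = ((1/2) * (\<alpha>^2/(\<alpha>^2+\<omega>^2)) / (\<gamma> * \<alpha>^3)) * Re E0 / (2 * \<omega>)" by simp
    also have "\<dots> = \<alpha>^2 * (\<alpha>*\<gamma>*a30 - \<alpha>*a20*g20 - \<gamma>*a11*a20 + \<alpha>*(\<gamma>*g21 - g11*g20))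
             / (4 * \<alpha> * \<gamma> * (\<alpha>^2 + \<omega>^2) * \<omega>)"
      unfolding R by (rule arith1[OF ne wpos']) (use pos in linarith)
    finally show ?thesis unfolding E fac2 .
  qed
  show ?thesis
    unfolding lyap1_def Let_def hf \<omega>_def[symmetric]
    apply (rule someI2_ex[OF ex])
    using key by (auto split: prod.splits)
qed



definition hh :: "real \<Rightarrow> real \<Rightarrow> real \<Rightarrow> real" where
  "hh \<theta> \<eta> u = - (u^5) + (1-\<theta>) * u^4 + (\<theta>-\<eta>) * u^3 + (1-\<theta>) * \<eta> * u^2 + \<theta> * \<eta> * u"
definition hp :: "real \<Rightarrow> real \<Rightarrow> real \<Rightarrow> real" where
  "hp \<theta> \<eta> u = - 5 * u^4 + 4 * (1-\<theta>) * u^3 + 3 * (\<theta>-\<eta>) * u^2 + 2 * (1-\<theta>) * \<eta> * u + \<theta> * \<eta>"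
definition hpp :: "real \<Rightarrow> real \<Rightarrow> real \<Rightarrow> real" where
  "hpp \<theta> \<eta> u = - 20 * u^3 + 12 * (1-\<theta>) * u^2 + 6 * (\<theta>-\<eta>) * u + 2 * (1-\<theta>) * \<eta>"
definition hppp :: "real \<Rightarrow> real \<Rightarrow> real \<Rightarrow> real" where
  "hppp \<theta> \<eta> u = - 60 * u^2 + 24 * (1-\<theta>) * u + 6 * (\<theta>-\<eta>)"

lemma fm_eq: "fm \<theta> \<eta> = (\<lambda>u v. hh \<theta> \<eta> u - u^2 * v)"
  by (rule ext)+ (simp add: fm_def hh_def algebra_simps power2_eq_square power3_eq_cube numeral_eq_Suc)

lemma pd0_eq:
  assumes "\<And>u v. ((\<lambda>x. H x v) has_real_derivative H' u v) (at u)"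
  shows "pd 0 H = H'"
  unfolding pd_def using DERIV_imp_deriv[OF assms] by (auto simp: fun_eq_iff)

lemma pd1_eq:
  assumes "\<And>u v. ((\<lambda>y. H u y) has_real_derivative H' u v) (at v)"
  shows "pd 1 H = H'"
  unfolding pd_def using DERIV_imp_deriv[OF assms] by (auto simp: fun_eq_iff)

lemma pd_cases: "pd j H = (if j = 0 then pd 0 H else pd 1 H)"
  by (simp add: pd_def)

lemma hh_deriv: "(hh \<theta> \<eta> has_real_derivative hp \<theta> \<eta> u) (at u)"
  unfolding hh_def hp_def
  by (auto intro!: derivative_eq_intros simp: algebra_simps)
lemma hp_deriv: "(hp \<theta> \<eta> has_real_derivative hpp \<theta> \<eta> u) (at u)"
  unfolding hpp_def hp_def
  by (auto intro!: derivative_eq_intros simp: algebra_simps)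
lemma hpp_deriv: "(hpp \<theta> \<eta> has_real_derivative hppp \<theta> \<eta> u) (at u)"
  unfolding hpp_def hppp_def
  by (auto intro!: derivative_eq_intros simp: algebra_simps)

lemma f_u: "pd 0 (fm \<theta> \<eta>) = (\<lambda>u v. hp \<theta> \<eta> u - 2 * u * v)"
  unfolding fm_eq by (rule pd0_eq) (auto intro!: derivative_eq_intros hh_deriv)
lemma f_v: "pd 1 (fm \<theta> \<eta>) = (\<lambda>u v. - (u^2))"
  unfolding fm_eq by (rule pd1_eq) (auto intro!: derivative_eq_intros)
lemma f_uu: "pd 0 (pd 0 (fm \<theta> \<eta>)) = (\<lambda>u v. hpp \<theta> \<eta> u - 2 * v)"
  unfolding f_u by (rule pd0_eq) (auto intro!: derivative_eq_intros hp_deriv)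
lemma f_uv: "pd 1 (pd 0 (fm \<theta> \<eta>)) = (\<lambda>u v. - 2 * u)"
  unfolding f_u by (rule pd1_eq) (auto intro!: derivative_eq_intros)
lemma f_vu: "pd 0 (pd 1 (fm \<theta> \<eta>)) = (\<lambda>u v. - 2 * u)"
  unfolding f_v by (rule pd0_eq) (auto intro!: derivative_eq_intros)
lemma f_vv: "pd 1 (pd 1 (fm \<theta> \<eta>)) = (\<lambda>u v. 0)"
  unfolding f_v by (rule pd1_eq) (auto intro!: derivative_eq_intros)
lemma f_uuu: "pd 0 (pd 0 (pd 0 (fm \<theta> \<eta>))) = (\<lambda>u v. hppp \<theta> \<eta> u)"
  unfolding f_uu by (rule pd0_eq) (auto intro!: derivative_eq_intros hpp_deriv)
lemma f_uuv: "pd 1 (pd 0 (pd 0 (fm \<theta> \<eta>))) = (\<lambda>u v. - 2)"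
  unfolding f_uu by (rule pd1_eq) (auto intro!: derivative_eq_intros)
lemma f_uvu: "pd 0 (pd 1 (pd 0 (fm \<theta> \<eta>))) = (\<lambda>u v. - 2)"
  unfolding f_uv by (rule pd0_eq) (auto intro!: derivative_eq_intros)
lemma f_vuu: "pd 0 (pd 0 (pd 1 (fm \<theta> \<eta>))) = (\<lambda>u v. - 2)"
  unfolding f_vu by (rule pd0_eq) (auto intro!: derivative_eq_intros)
lemma f_uvv: "pd 1 (pd 1 (pd 0 (fm \<theta> \<eta>))) = (\<lambda>u v. 0)"
  unfolding f_uv by (rule pd1_eq) (auto intro!: derivative_eq_intros)
lemma f_vuv: "pd 1 (pd 0 (pd 1 (fm \<theta> \<eta>))) = (\<lambda>u v. 0)"
  unfolding f_vu by (rule pd1_eq) (auto intro!: derivative_eq_intros)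
lemma f_vvu: "pd 0 (pd 1 (pd 1 (fm \<theta> \<eta>))) = (\<lambda>u v. 0)"
  unfolding f_vv by (rule pd0_eq) (auto intro!: derivative_eq_intros)
lemma f_vvv: "pd 1 (pd 1 (pd 1 (fm \<theta> \<eta>))) = (\<lambda>u v. 0)"
  unfolding f_vv by (rule pd1_eq) (auto intro!: derivative_eq_intros)

lemma G_eq: "(\<lambda>u v. e * gm \<eta> u v \<delta>) = (\<lambda>u v. e * (1 - \<delta>) * u^2 * v - e * \<delta> * \<eta> * v)"
  by (rule ext)+ (simp add: gm_def algebra_simps)

lemma g_u: "pd 0 (\<lambda>u v. e * gm \<eta> u v \<delta>) = (\<lambda>u v. e * (1 - \<delta>) * (2 * u) * v)"
  unfolding G_eq by (rule pd0_eq) (auto intro!: derivative_eq_intros)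
lemma g_v: "pd 1 (\<lambda>u v. e * gm \<eta> u v \<delta>) = (\<lambda>u v. e * (1 - \<delta>) * u^2 - e * \<delta> * \<eta>)"
  unfolding G_eq by (rule pd1_eq) (auto intro!: derivative_eq_intros)
lemma g_uu: "pd 0 (pd 0 (\<lambda>u v. e * gm \<eta> u v \<delta>)) = (\<lambda>u v. e * (1 - \<delta>) * 2 * v)"
  unfolding g_u by (rule pd0_eq) (auto intro!: derivative_eq_intros)
lemma g_uv: "pd 1 (pd 0 (\<lambda>u v. e * gm \<eta> u v \<delta>)) = (\<lambda>u v. e * (1 - \<delta>) * (2 * u))"
  unfolding g_u by (rule pd1_eq) (auto intro!: derivative_eq_intros)
lemma g_vu: "pd 0 (pd 1 (\<lambda>u v. e * gm \<eta> u v \<delta>)) = (\<lambda>u v. e * (1 - \<delta>) * (2 * u))"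
  unfolding g_v by (rule pd0_eq) (auto intro!: derivative_eq_intros)
lemma g_vv: "pd 1 (pd 1 (\<lambda>u v. e * gm \<eta> u v \<delta>)) = (\<lambda>u v. 0)"
  unfolding g_v by (rule pd1_eq) (auto intro!: derivative_eq_intros)
lemma g_uuu: "pd 0 (pd 0 (pd 0 (\<lambda>u v. e * gm \<eta> u v \<delta>))) = (\<lambda>u v. 0)"
  unfolding g_uu by (rule pd0_eq) (auto intro!: derivative_eq_intros)
lemma g_uuv: "pd 1 (pd 0 (pd 0 (\<lambda>u v. e * gm \<eta> u v \<delta>))) = (\<lambda>u v. e * (1 - \<delta>) * 2)"
  unfolding g_uu by (rule pd1_eq) (auto intro!: derivative_eq_intros)
lemma g_uvu: "pd 0 (pd 1 (pd 0 (\<lambda>u v. e * gm \<eta> u v \<delta>))) = (\<lambda>u v. e * (1 - \<delta>) * 2)"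
  unfolding g_uv by (rule pd0_eq) (auto intro!: derivative_eq_intros)
lemma g_vuu: "pd 0 (pd 0 (pd 1 (\<lambda>u v. e * gm \<eta> u v \<delta>))) = (\<lambda>u v. e * (1 - \<delta>) * 2)"
  unfolding g_vu by (rule pd0_eq) (auto intro!: derivative_eq_intros)
lemma g_uvv: "pd 1 (pd 1 (pd 0 (\<lambda>u v. e * gm \<eta> u v \<delta>))) = (\<lambda>u v. 0)"
  unfolding g_uv by (rule pd1_eq) (auto intro!: derivative_eq_intros)
lemma g_vuv: "pd 1 (pd 0 (pd 1 (\<lambda>u v. e * gm \<eta> u v \<delta>))) = (\<lambda>u v. 0)"
  unfolding g_vu by (rule pd1_eq) (auto intro!: derivative_eq_intros)
lemma g_vvu: "pd 0 (pd 1 (pd 1 (\<lambda>u v. e * gm \<eta> u v \<delta>))) = (\<lambda>u v. 0)"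
  unfolding g_vv by (rule pd0_eq) (auto intro!: derivative_eq_intros)
lemma g_vvv: "pd 1 (pd 1 (pd 1 (\<lambda>u v. e * gm \<eta> u v \<delta>))) = (\<lambda>u v. 0)"
  unfolding g_vv by (rule pd1_eq) (auto intro!: derivative_eq_intros)

lemma gm_one: "(\<lambda>u v. gm \<eta> u v \<delta>) = (\<lambda>u v. 1 * gm \<eta> u v \<delta>)" by simp

lemma comp0: "comp (field \<theta> \<eta> \<epsilon> \<delta>) 0 = fm \<theta> \<eta>"
  by (simp add: comp_def field_def fun_eq_iff)
lemma comp1: "i \<noteq> 0 \<Longrightarrow> comp (field \<theta> \<eta> \<epsilon> \<delta>) i = (\<lambda>u v. \<epsilon> * gm \<eta> u v \<delta>)"
  by (simp add: comp_def field_def fun_eq_iff)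


lemma p_neg_gt1:
  fixes c \<theta> \<eta> :: real assumes "c > 1" "\<theta> > 0" "\<eta> > 0"
  shows "-3 * c^4 + 2 * (1-\<theta>) * c^3 + (\<theta>-\<eta>) * c^2 - \<theta> * \<eta> < 0"
proof -
  have c2: "c^2 > 0" using assms by simp
  have a: "\<theta> * c^2 * (2 * c - 1) > 0" using assms c2 by (intro mult_pos_pos) auto
  have b: "c^3 * (3 * c - 2) > 0" using assms by (intro mult_pos_pos) auto
  have e: "\<eta> * c^2 \<ge> 0" using assms by simp
  have f: "\<theta> * \<eta> > 0" using assms by simp
  have "-3 * c^4 + 2 * (1-\<theta>) * c^3 + (\<theta>-\<eta>) * c^2 - \<theta> * \<eta> = -(c^3 * (3 * c - 2)) - \<theta> * c^2 * (2 * c - 1) - \<eta> * c^2 - \<theta> * \<eta>"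
    by (simp add: algebra_simps eval_nat_numeral)
  then show ?thesis using a b e f by linarith
qed

lemma p_neg_lt:
  fixes c \<theta> \<eta> :: real assumes "c < -\<theta>" "\<theta> > 0" "\<eta> > 0"
  shows "-3 * c^4 + 2 * (1-\<theta>) * c^3 + (\<theta>-\<eta>) * c^2 - \<theta> * \<eta> < 0"
proof -
  define x where "x = -c"
  have x: "x > \<theta>" "x > 0" using assms unfolding x_def by auto
  have a: "x^4 > 0" "x^3 > 0" using x by auto
  have b: "x^3 * (x - \<theta>) > 0" "x^2 * (x - \<theta>) > 0" using x by (auto intro!: mult_pos_pos)
  have e: "\<eta> * x^2 \<ge> 0" using assms by simp
  have f: "\<theta> * \<eta> > 0" using assms by simp
  have "-3 * c^4 + 2 * (1-\<theta>) * c^3 + (\<theta>-\<eta>) * c^2 - \<theta> * \<eta> = -(x^4) - (x^3) - 2 * (x^3 * (x - \<theta>)) - x^2 * (x - \<theta>) - \<eta> * x^2 - \<theta> * \<eta>"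
    unfolding x_def by (simp add: algebra_simps eval_nat_numeral)
  then show ?thesis using a b e f by linarith
qed


lemma g1_u: "pd 0 (\<lambda>u v. gm \<eta> u v \<delta>) = (\<lambda>u v. (1 - \<delta>) * (2 * u) * v)"
  unfolding gm_def by (rule pd0_eq) (auto intro!: derivative_eq_intros simp: algebra_simps)
lemma g1_uu: "pd 0 (pd 0 (\<lambda>u v. gm \<eta> u v \<delta>)) = (\<lambda>u v. (1 - \<delta>) * 2 * v)"
  unfolding g1_u by (rule pd0_eq) (auto intro!: derivative_eq_intros)
lemma g1_d: "deriv (\<lambda>d. gm \<eta> u v d) \<delta> = - v * (u^2 + \<eta>)"
  unfolding gm_def by (rule DERIV_imp_deriv) (auto intro!: derivative_eq_intros)

lemma arith2:
  fixes a e A g Sx s :: real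
  assumes "a \<noteq> 0" "g \<noteq> 0" "Sx \<noteq> 0" "s \<noteq> 0"
  shows "(- a)^2 * (- e * A) / (4 * (- a) * g * Sx * s) = a * e / (4 * g * Sx * s) * A"
  using assms by (simp add: field_simps power2_eq_square)

lemma main_facts:
  fixes \<eta> \<theta> :: real
  assumes "\<eta> > 0" and "\<theta> > 0"
    and "acoef \<theta> \<eta> 1 0 = 0"
    and "bcoef \<theta> \<eta> 1 0 \<noteq> 0"
  shows "u_m \<theta> \<eta> \<noteq> 0" "u_m \<theta> \<eta> * v_m \<theta> \<eta> > 0"
    "hp \<theta> \<eta> (u_m \<theta> \<eta>) = 2 * u_m \<theta> \<eta> * v_m \<theta> \<eta>"
    "(u_m \<theta> \<eta>)^2 * v_m \<theta> \<eta> = hh \<theta> \<eta> (u_m \<theta> \<eta>)"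
proof -
  define c where "c = u_m \<theta> \<eta>"
  define V where "V = v_m \<theta> \<eta>"
  define d where "d = delta_star \<theta> \<eta>"
  have Vphi: "V = phi \<theta> \<eta> c" by (simp add: V_def v_m_def c_def)
  have H6: "hp \<theta> \<eta> c - 2 * c * V = 0" using assms(3) by (simp add: acoef_def pdn_def f_u c_def V_def)
  have c0: "c \<noteq> 0"
  proof
    assume "c = 0"
    with H6 have "\<theta> * \<eta> = 0" by (simp add: hp_def)
    with assms(1,2) show False by simp
  qed
  have hc: "c^2 * V = hh \<theta> \<eta> c" unfolding Vphi phi_def hh_def using c0
    by (simp add: field_simps eval_nat_numeral)
  have cV: "c * V = (1 - c) * (c + \<theta>) * (c^2 + \<eta>)" unfolding Vphi phi_def using c0
    by (simp add: field_simps)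
  have b10: "bcoef \<theta> \<eta> 1 0 = (1 - d) * (2 * c) * V"
    unfolding bcoef_def pdn_def d_def c_def V_def by (simp add: g1_u)
  have V0: "V \<noteq> 0" using assms(4) b10 by auto
  have pc: "c * (-3 * c^4 + 2 * (1-\<theta>) * c^3 + (\<theta>-\<eta>) * c^2 - \<theta> * \<eta>) = 0"
  proof -
    have "c * (-3 * c^4 + 2 * (1-\<theta>) * c^3 + (\<theta>-\<eta>) * c^2 - \<theta> * \<eta>) = c * hp \<theta> \<eta> c - 2 * hh \<theta> \<eta> c"
      by (simp add: hp_def hh_def algebra_simps eval_nat_numeral)
    also have "\<dots> = 0" using H6 hc by (simp add: algebra_simps power2_eq_square)
    finally show ?thesis .
  qed
  then have p0: "-3 * c^4 + 2 * (1-\<theta>) * c^3 + (\<theta>-\<eta>) * c^2 - \<theta> * \<eta> = 0" using c0 by simp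
  have c1: "c < 1"
  proof (rule ccontr)
    assume "\<not> c < 1"
    then consider "c = 1" | "c > 1" by linarith
    then show False
    proof cases
      case 1 then show ?thesis using cV V0 by simp
    next
      case 2 then show ?thesis using p_neg_gt1[OF 2 assms(2,1)] p0 by simp
    qed
  qed
  have c2: "c > -\<theta>"
  proof (rule ccontr)
    assume "\<not> c > -\<theta>"
    then consider "c = -\<theta>" | "c < -\<theta>" by linarith
    then show False
    proof cases
      case 1 then show ?thesis using cV V0 c0 by simp
    next
      case 2 then show ?thesis using p_neg_lt[OF 2 assms(2,1)] p0 by simp
    qed
  qed
  have "(1 - c) * (c + \<theta>) * (c^2 + \<eta>) > 0"
    using c1 c2 assms(1) by (intro mult_pos_pos) (auto intro: add_nonneg_pos)
  then show "u_m \<theta> \<eta> * v_m \<theta> \<eta> > 0" using cV c_def V_def by simp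
  show "u_m \<theta> \<eta> \<noteq> 0" using c0 c_def by simp
  show "hp \<theta> \<eta> (u_m \<theta> \<eta>) = 2 * u_m \<theta> \<eta> * v_m \<theta> \<eta>" using H6 c_def V_def by simp
  show "(u_m \<theta> \<eta>)^2 * v_m \<theta> \<eta> = hh \<theta> \<eta> (u_m \<theta> \<eta>)" using hc c_def V_def by simp
qed

lemma pd_ne0: "j \<noteq> 0 \<Longrightarrow> pd j H = pd 1 H"
  by (simp add: pd_def)

lemmas fc1 = f_u f_v g_u g_v
lemmas fc2 = f_uu f_uv f_vu f_vv g_uu g_uv g_vu g_vv
lemmas fc3 = f_uuu f_uuv f_uvu f_vuu f_uvv f_vuv f_vvu f_vvv g_uuu g_uuv g_uvu g_vuu g_uvv g_vuv g_vvu g_vvv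
lemmas fc1' = fc1[unfolded One_nat_def]
lemmas fc2' = fc2[unfolded One_nat_def]
lemmas fc3' = fc3[unfolded One_nat_def]

lemma jac_field: "jac (field \<theta> \<eta> \<epsilon> \<delta>) (u, v) = (\<lambda>i j. if i = 0 then (if j = 0 then hp \<theta> \<eta> u - 2 * u * v else - (u^2))
     else (if j = 0 then \<epsilon> * (1 - \<delta>) * (2 * u) * v else \<epsilon> * (1 - \<delta>) * u^2 - \<epsilon> * \<delta> * \<eta>))"
proof (intro ext)
  fix i j :: nat
  show "jac (field \<theta> \<eta> \<epsilon> \<delta>) (u, v) i j = (if i = 0 then (if j = 0 then hp \<theta> \<eta> u - 2 * u * v else - (u^2))
     else (if j = 0 then \<epsilon> * (1 - \<delta>) * (2 * u) * v else \<epsilon> * (1 - \<delta>) * u^2 - \<epsilon> * \<delta> * \<eta>))"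
    by (cases "i = 0"; cases "j = 0") (simp_all add: jac_def pd_ne0 comp0 comp1 fc1 fc1')
qed

lemma Bform_field: "Bform (field \<theta> \<eta> \<epsilon> \<delta>) (u, v) = (\<lambda>(x::nat\<Rightarrow>complex) (y::nat\<Rightarrow>complex) i::nat.
     if i = 0 then of_real (hpp \<theta> \<eta> u - 2 * v) * x 0 * y 0 + of_real (- 2 * u) * (x 0 * y 1 + x 1 * y 0)
     else of_real (\<epsilon> * (1 - \<delta>) * 2 * v) * x 0 * y 0 + of_real (\<epsilon> * (1 - \<delta>) * (2 * u)) * (x 0 * y 1 + x 1 * y 0))"
proof (intro ext)
  fix x y :: "nat \<Rightarrow> complex" and i :: nat
  show "Bform (field \<theta> \<eta> \<epsilon> \<delta>) (u, v) x y i = (if i = 0 then of_real (hpp \<theta> \<eta> u - 2 * v) * x 0 * y 0 + of_real (- 2 * u) * (x 0 * y 1 + x 1 * y 0)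
     else of_real (\<epsilon> * (1 - \<delta>) * 2 * v) * x 0 * y 0 + of_real (\<epsilon> * (1 - \<delta>) * (2 * u)) * (x 0 * y 1 + x 1 * y 0))"
  proof (cases "i = 0")
    case True then show ?thesis by (simp only: Bform_def sum2 comp0 fc2 fc2' One_nat_def) (simp add: algebra_simps)
  next
    case False
    have cc: "comp (field \<theta> \<eta> \<epsilon> \<delta>) i = (\<lambda>u v. \<epsilon> * gm \<eta> u v \<delta>)" by (rule comp1[OF False])
    show ?thesis by (simp only: Bform_def sum2 cc fc2 fc2' One_nat_def) (simp add: algebra_simps False)
  qed
qed

lemma Cform_field: "Cform (field \<theta> \<eta> \<epsilon> \<delta>) (u, v) = (\<lambda>(x::nat\<Rightarrow>complex) (y::nat\<Rightarrow>complex) (z::nat\<Rightarrow>complex) i::nat.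
     if i = 0 then of_real (hppp \<theta> \<eta> u) * x 0 * y 0 * z 0 + of_real (- 2) * (x 0 * y 0 * z 1 + x 0 * y 1 * z 0 + x 1 * y 0 * z 0)
     else of_real (\<epsilon> * (1 - \<delta>) * 2) * (x 0 * y 0 * z 1 + x 0 * y 1 * z 0 + x 1 * y 0 * z 0))"
proof (intro ext)
  fix x y z :: "nat \<Rightarrow> complex" and i :: nat
  show "Cform (field \<theta> \<eta> \<epsilon> \<delta>) (u, v) x y z i = (if i = 0 then of_real (hppp \<theta> \<eta> u) * x 0 * y 0 * z 0 + of_real (- 2) * (x 0 * y 0 * z 1 + x 0 * y 1 * z 0 + x 1 * y 0 * z 0)
     else of_real (\<epsilon> * (1 - \<delta>) * 2) * (x 0 * y 0 * z 1 + x 0 * y 1 * z 0 + x 1 * y 0 * z 0))"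
  proof (cases "i = 0")
    case True then show ?thesis by (simp only: Cform_def sum2 comp0 fc3 fc3' One_nat_def) (simp add: algebra_simps)
  next
    case False
    have cc: "comp (field \<theta> \<eta> \<epsilon> \<delta>) i = (\<lambda>u v. \<epsilon> * gm \<eta> u v \<delta>)" by (rule comp1[OF False])
    show ?thesis by (simp only: Cform_def sum2 cc fc3 fc3' One_nat_def) (simp add: algebra_simps False)
  qed
qed

lemma jtrace_field: "jtrace (field \<theta> \<eta> \<epsilon> \<delta>) (u, v) = hp \<theta> \<eta> u - 2 * u * v + (\<epsilon> * (1 - \<delta>) * u^2 - \<epsilon> * \<delta> * \<eta>)"
  by (simp add: jtrace_def jac_field)

lemma jdet_field: "jdet (field \<theta> \<eta> \<epsilon> \<delta>) (u, v) = (hp \<theta> \<eta> u - 2 * u * v) * (\<epsilon> * (1 - \<delta>) * u^2 - \<epsilon> * \<delta> * \<eta>) + u^2 * (\<epsilon> * (1 - \<delta>) * (2 * u) * v)"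
  by (simp add: jdet_def jac_field)

lemma equil:
  assumes "U \<noteq> 0" "U^2 * (1 - \<delta>) = \<delta> * \<eta>"
  shows "field \<theta> \<eta> \<epsilon> \<delta> U (phi \<theta> \<eta> U) = (0, 0)"
proof -
  have "fm \<theta> \<eta> U (phi \<theta> \<eta> U) = 0" unfolding fm_def phi_def using assms(1)
    by (simp add: field_simps power2_eq_square)
  moreover have "gm \<eta> U (phi \<theta> \<eta> U) \<delta> = phi \<theta> \<eta> U * (U^2 * (1 - \<delta>) - \<delta> * \<eta>)"
    unfolding gm_def by (simp add: algebra_simps)
  ultimately show ?thesis using assms(2) by (simp add: field_def)
qed

theorem theorem1:
  fixes \<eta> \<theta> :: real
  assumes "\<eta> > 0" and "\<theta> > 0" and "(\<eta>, \<theta>) \<in> Rreg"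
    and "fm \<theta> \<eta> (u_m \<theta> \<eta>) (v_m \<theta> \<eta>) = 0"
    and "gm \<eta> (u_m \<theta> \<eta>) (v_m \<theta> \<eta>) (delta_star \<theta> \<eta>) = 0"
    and "acoef \<theta> \<eta> 1 0 = 0"
    and "acoef \<theta> \<eta> 0 1 \<noteq> 0"
    and "acoef \<theta> \<eta> 2 0 \<noteq> 0"
    and "bcoef \<theta> \<eta> 1 0 \<noteq> 0"
    and "deriv (\<lambda>d. gm \<eta> (u_m \<theta> \<eta>) (v_m \<theta> \<eta>) d) (delta_star \<theta> \<eta>) \<noteq> 0"
  shows "\<exists>\<epsilon>0>0. \<exists>\<delta>0>0. \<exists>P2 :: real \<Rightarrow> real \<Rightarrow> real \<times> real. \<exists>\<delta>H :: real \<Rightarrow> real.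
     (\<forall>\<epsilon> \<delta>. 0 < \<epsilon> \<and> \<epsilon> < \<epsilon>0 \<and> \<bar>\<delta> - delta_star \<theta> \<eta>\<bar> < \<delta>0 \<longrightarrow>
         field \<theta> \<eta> \<epsilon> \<delta> (fst (P2 \<epsilon> \<delta>)) (snd (P2 \<epsilon> \<delta>)) = (0, 0)) \<and>
     ((\<lambda>(\<epsilon>, \<delta>). P2 \<epsilon> \<delta>) \<longlongrightarrow> (u_m \<theta> \<eta>, v_m \<theta> \<eta>))
         (at (0, delta_star \<theta> \<eta>) within
            {(\<epsilon>, \<delta>). 0 < \<epsilon> \<and> \<epsilon> < \<epsilon>0 \<and> \<bar>\<delta> - delta_star \<theta> \<eta>\<bar> < \<delta>0}) \<and>
     (\<lambda>\<epsilon>. \<delta>H \<epsilon> - delta_star \<theta> \<eta>) \<in> O[at_right 0](\<lambda>\<epsilon>. \<epsilon> powr (5/2)) \<and>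
     (\<forall>\<epsilon>. 0 < \<epsilon> \<and> \<epsilon> < \<epsilon>0 \<longrightarrow>
         \<bar>\<delta>H \<epsilon> - delta_star \<theta> \<eta>\<bar> < \<delta>0 \<and>
         hopf_point (\<lambda>\<delta>. field \<theta> \<eta> \<epsilon> \<delta>) (\<lambda>\<delta>. P2 \<epsilon> \<delta>) (\<delta>H \<epsilon>) \<and>
         (Acoef \<theta> \<eta> \<noteq> 0 \<longrightarrow> lyap1 (field \<theta> \<eta> \<epsilon> (\<delta>H \<epsilon>)) (P2 \<epsilon> (\<delta>H \<epsilon>)) \<noteq> 0) \<and>
         (Acoef \<theta> \<eta> < 0 \<longrightarrow> lyap1 (field \<theta> \<eta> \<epsilon> (\<delta>H \<epsilon>)) (P2 \<epsilon> (\<delta>H \<epsilon>)) < 0) \<and>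
         (Acoef \<theta> \<eta> > 0 \<longrightarrow> lyap1 (field \<theta> \<eta> \<epsilon> (\<delta>H \<epsilon>)) (P2 \<epsilon> (\<delta>H \<epsilon>)) > 0)) \<and>
     ((\<lambda>\<epsilon>. hopf_freq (field \<theta> \<eta> \<epsilon> (\<delta>H \<epsilon>)) (P2 \<epsilon> (\<delta>H \<epsilon>))) \<longlongrightarrow> 0) (at_right 0)"
proof -
  define c where "c = u_m \<theta> \<eta>"
  define V where "V = v_m \<theta> \<eta>"
  define d where "d = delta_star \<theta> \<eta>"
  note mf = main_facts[OF assms(1,2,6,9)]
  have c0: "c \<noteq> 0" and cVpos: "c * V > 0" and hpc: "hp \<theta> \<eta> c = 2 * c * V" and hhc: "c^2 * V = hh \<theta> \<eta> c"
    using mf unfolding c_def V_def by auto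
  have Vphi: "phi \<theta> \<eta> c = V" by (simp add: V_def v_m_def c_def)
  have dd: "d = c^2/(c^2+\<eta>)" by (simp add: d_def delta_star_def c_def)
  have cpos2: "c^2 > 0" using c0 by simp
  have cpe: "c^2 + \<eta> > 0" using cpos2 assms(1) by linarith
  have d0: "0 < d" "d < 1" using cpos2 cpe assms(1) unfolding dd by (auto simp: field_simps)
  have dkey: "(1 - d) * c^2 = d * \<eta>" unfolding dd using cpe by (simp add: field_simps)
  have a20ne: "hpp \<theta> \<eta> c - 2 * V \<noteq> 0" using assms(8)
    by (simp add: acoef_def pdn_def f_uu numeral_2_eq_2 c_def V_def)
  define \<delta>0 where "\<delta>0 = min d (1 - d) / 2"
  have \<delta>0pos: "\<delta>0 > 0" using d0 unfolding \<delta>0_def by simp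
  have \<delta>range: "0 < \<delta> \<and> \<delta> < 1" if "\<bar>\<delta> - d\<bar> < \<delta>0" for \<delta>
  proof -
    have "\<delta>0 \<le> d/2" "\<delta>0 \<le> (1-d)/2" unfolding \<delta>0_def by auto
    then show ?thesis using that d0 by (auto simp: abs_less_iff)
  qed
  define U where "U = (\<lambda>\<delta>. sgn c * sqrt (\<delta> * \<eta> / (1 - \<delta>)))"
  define P2 where "P2 = (\<lambda>(\<epsilon>::real) \<delta>. (U \<delta>, phi \<theta> \<eta> (U \<delta>)))"
  have Uprops: "U \<delta> \<noteq> 0 \<and> (U \<delta>)^2 * (1 - \<delta>) = \<delta> * \<eta>" if "0 < \<delta>" "\<delta> < 1" for \<delta>
  proof -
    have k: "\<delta> * \<eta> / (1 - \<delta>) > 0" using that assms(1) by simp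
    have s2: "(sgn c)^2 = 1" using c0 by (simp add: power2_eq_square sgn_if)
    have "U \<delta> \<noteq> 0" unfolding U_def using k c0 that assms(1) by (simp add: sgn_if)
    moreover have "(U \<delta>)^2 = \<delta> * \<eta> / (1 - \<delta>)" unfolding U_def using k s2
      by (simp add: power_mult_distrib)
    ultimately show ?thesis using that by simp
  qed
  have kd: "d * \<eta> / (1 - d) = c^2" using dkey d0 by (simp add: field_simps)
  have Ud: "U d = c" unfolding U_def kd by (simp add: sgn_mult_abs)
  have P2d: "P2 \<epsilon> d = (c, V)" for \<epsilon> unfolding P2_def using Ud Vphi by simp
  have eqs: "field \<theta> \<eta> \<epsilon> \<delta> (fst (P2 \<epsilon> \<delta>)) (snd (P2 \<epsilon> \<delta>)) = (0, 0)" if "\<bar>\<delta> - d\<bar> < \<delta>0" for \<epsilon> \<delta>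
    using Uprops[of \<delta>] \<delta>range[OF that] unfolding P2_def by (auto intro: equil)
  have contU: "isCont U d" unfolding U_def using d0 by (auto intro!: continuous_intros)
  have contphi: "isCont (phi \<theta> \<eta>) (U d)" unfolding phi_def Ud using c0 by (auto intro!: continuous_intros)
  have contP: "isCont (\<lambda>\<delta>. (U \<delta>, phi \<theta> \<eta> (U \<delta>))) d"
    using contU isCont_o2[OF contU contphi] by (auto intro!: continuous_intros)
  have lim: "((\<lambda>(\<epsilon>, \<delta>). P2 \<epsilon> \<delta>) \<longlongrightarrow> (c, V)) (at (0, d) within S)" for S
  proof -
    have e: "(\<lambda>(\<epsilon>, \<delta>). P2 \<epsilon> \<delta>) = (\<lambda>z. (\<lambda>\<delta>. (U \<delta>, phi \<theta> \<eta> (U \<delta>))) (snd z))"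
      by (auto simp: P2_def fun_eq_iff)
    have "((\<lambda>z. (\<lambda>\<delta>. (U \<delta>, phi \<theta> \<eta> (U \<delta>))) (snd z)) \<longlongrightarrow> (U d, phi \<theta> \<eta> (U d))) (at (0, d) within S)"
      by (rule isCont_tendsto_compose[OF contP]) (use tendsto_snd[OF tendsto_ident_at[of "(0::real, d)" S]] in simp)
    then show ?thesis unfolding e Ud Vphi .
  qed
  have jtr: "jtrace (field \<theta> \<eta> \<epsilon> d) (P2 \<epsilon> d) = 0" for \<epsilon>
  proof -
    have "\<epsilon> * (1 - d) * c^2 - \<epsilon> * d * \<eta> = \<epsilon> * ((1 - d) * c^2 - d * \<eta>)" by (simp add: algebra_simps)
    then show ?thesis unfolding P2d jtrace_field using hpc dkey by simp
  qed
  have jdt: "jdet (field \<theta> \<eta> \<epsilon> d) (P2 \<epsilon> d) = \<epsilon> * (c^2 * (2 * (1 - d) * (c * V)))" for \<epsilon>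
  proof -
    have "\<epsilon> * (1 - d) * c^2 - \<epsilon> * d * \<eta> = \<epsilon> * ((1 - d) * c^2 - d * \<eta>)" by (simp add: algebra_simps)
    then show ?thesis unfolding P2d jdet_field using hpc dkey by (simp add: algebra_simps)
  qed
  have d1: "2 * (1 - d) > 0" using d0 by simp
  have Kpos: "c^2 * (2 * (1 - d) * (c * V)) > 0" using mult_pos_pos[OF cpos2 mult_pos_pos[OF d1 cVpos]] .
  define k where "k = (\<lambda>\<delta>. \<delta> * \<eta> / (1 - \<delta>))"
  have kdc: "k d = c^2" using kd unfolding k_def .
  have dk: "(k has_real_derivative \<eta> / (1 - d)^2) (at d)" unfolding k_def using d0
    by (auto intro!: derivative_eq_intros simp: field_simps power2_eq_square)
  have dsq: "DERIV sqrt (k d) :> inverse (sqrt (k d)) / 2" using DERIV_real_sqrt[of "k d"] kdc cpos2 by simp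
  define U' where "U' = sgn c * (inverse (sqrt (k d)) / 2 * (\<eta> / (1 - d)^2))"
  have dU: "(U has_real_derivative U') (at d)"
  proof -
    have "((\<lambda>\<delta>. sgn c * sqrt (k \<delta>)) has_real_derivative U') (at d)" unfolding U'_def
      by (intro DERIV_cmult DERIV_chain2[OF dsq dk])
    moreover have "(\<lambda>\<delta>. sgn c * sqrt (k \<delta>)) = U" unfolding U_def k_def ..
    ultimately show ?thesis by simp
  qed
  have U'ne: "U' \<noteq> 0" unfolding U'_def using c0 d0 assms(1) kdc cpos2 by (simp add: sgn_if)
  have dhp: "((\<lambda>x. hp \<theta> \<eta> (U x)) has_real_derivative hpp \<theta> \<eta> c * U') (at d)"
    using DERIV_chain2[OF hp_deriv dU] Ud by simp
  have dhh: "((\<lambda>x. hh \<theta> \<eta> (U x)) has_real_derivative hp \<theta> \<eta> c * U') (at d)"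
    using DERIV_chain2[OF hh_deriv dU] Ud by simp
  have dT2: "((\<lambda>x. hp \<theta> \<eta> (U x) - 2 * (hh \<theta> \<eta> (U x) / U x)) has_real_derivative
      (hpp \<theta> \<eta> c * U' - 2 * ((hp \<theta> \<eta> c * U' * U d - hh \<theta> \<eta> (U d) * U') / (U d * U d)))) (at d)"
    by (intro DERIV_diff DERIV_cmult DERIV_divide dhp dhh dU) (simp add: Ud c0)
  define Dv where "Dv = U' * (hpp \<theta> \<eta> c - 2 * V)"
  have Dv_eq: "hpp \<theta> \<eta> c * U' - 2 * ((hp \<theta> \<eta> c * U' * U d - hh \<theta> \<eta> (U d) * U') / (U d * U d)) = Dv"
    unfolding Dv_def Ud hpc hhc[symmetric] using c0 by (simp add: field_simps power2_eq_square)
  have Dvne: "Dv \<noteq> 0" unfolding Dv_def using U'ne a20ne by simp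
  have phihh: "u * phi \<theta> \<eta> u = hh \<theta> \<eta> u / u" if "u \<noteq> 0" for u
    unfolding phi_def hh_def using that by (simp add: field_simps eval_nat_numeral)
  have T2eq: "hp \<theta> \<eta> (U x) - 2 * (hh \<theta> \<eta> (U x) / U x) = jtrace (field \<theta> \<eta> \<epsilon> x) (P2 \<epsilon> x)"
    if "x \<in> {0<..<1}" for x \<epsilon>
  proof -
    have u: "U x \<noteq> 0" "(U x)^2 * (1 - x) = x * \<eta>" using Uprops[of x] that by auto
    have "\<epsilon> * (1 - x) * (U x)^2 - \<epsilon> * x * \<eta> = \<epsilon> * ((U x)^2 * (1 - x) - x * \<eta>)" by (simp add: algebra_simps)
    also have "\<dots> = 0" using u by simp
    finally have z: "\<epsilon> * (1 - x) * (U x)^2 - \<epsilon> * x * \<eta> = 0" .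
    have "2 * U x * phi \<theta> \<eta> (U x) = 2 * (hh \<theta> \<eta> (U x) / U x)" using phihh[OF u(1)] by simp
    then show ?thesis unfolding P2_def jtrace_field using z by simp
  qed
  have dtr: "((\<lambda>\<delta>. jtrace (field \<theta> \<eta> \<epsilon> \<delta>) (P2 \<epsilon> \<delta>)) has_real_derivative Dv) (at d)" for \<epsilon>
    by (rule has_field_derivative_transform_within_open[OF dT2[unfolded Dv_eq] open_greaterThanLessThan])
       (use d0 T2eq in auto)
  have Aeq: "Acoef \<theta> \<eta> = (-(c^2)) * (hpp \<theta> \<eta> c - 2 * V) * ((1 - d) * 2 * V)
      - (-(c^2)) * hppp \<theta> \<eta> c * ((1 - d) * (2 * c) * V)
      + (- 2 * c) * (hpp \<theta> \<eta> c - 2 * V) * ((1 - d) * (2 * c) * V)"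
  proof -
    have a01: "acoef \<theta> \<eta> 0 1 = -(c^2)"
      unfolding acoef_def pdn_def One_nat_def funpow.simps comp_apply id_apply f_v[unfolded One_nat_def] c_def by simp
    have a20: "acoef \<theta> \<eta> 2 0 = hpp \<theta> \<eta> c - 2 * V"
      unfolding acoef_def pdn_def numeral_2_eq_2 funpow.simps comp_apply id_apply f_uu c_def V_def by simp
    have a30: "acoef \<theta> \<eta> 3 0 = hppp \<theta> \<eta> c"
      unfolding acoef_def pdn_def numeral_3_eq_3 funpow.simps comp_apply id_apply f_uuu c_def by simp
    have a11: "acoef \<theta> \<eta> 1 1 = - 2 * c"
      unfolding acoef_def pdn_def One_nat_def funpow.simps comp_apply id_apply f_vu[unfolded One_nat_def] c_def by simp
    have b10: "bcoef \<theta> \<eta> 1 0 = (1 - d) * (2 * c) * V"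
      unfolding bcoef_def pdn_def One_nat_def funpow.simps comp_apply id_apply g1_u[unfolded One_nat_def] c_def V_def d_def by simp
    have b20: "bcoef \<theta> \<eta> 2 0 = (1 - d) * 2 * V"
      unfolding bcoef_def pdn_def numeral_2_eq_2 funpow.simps comp_apply id_apply g1_uu c_def V_def d_def by simp
    show ?thesis unfolding Acoef_def a01 a20 a30 a11 b10 b20 ..
  qed
  have lyapK: "\<exists>K>0. lyap1 (field \<theta> \<eta> \<epsilon> d) (P2 \<epsilon> d) = K * Acoef \<theta> \<eta>" if "\<epsilon> > 0" for \<epsilon>
  proof -
    define \<gamma> where "\<gamma> = \<epsilon> * (1 - d) * (2 * c) * V"
    have z: "\<epsilon> * (1 - d) * c^2 - \<epsilon> * d * \<eta> = 0"
    proof -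
      have "\<epsilon> * (1 - d) * c^2 - \<epsilon> * d * \<eta> = \<epsilon> * ((1 - d) * c^2 - d * \<eta>)" by (simp add: algebra_simps)
      then show ?thesis using dkey by simp
    qed
    have J: "jac (field \<theta> \<eta> \<epsilon> d) (P2 \<epsilon> d) = (\<lambda>i j. if i = 0 then (if j = 0 then 0 else -(c^2)) else (if j = 0 then \<gamma> else 0))"
      unfolding P2d jac_field \<gamma>_def z hpc diff_self by (rule refl)
    have Bf: "Bform (field \<theta> \<eta> \<epsilon> d) (P2 \<epsilon> d) = (\<lambda>(x::nat\<Rightarrow>complex) (y::nat\<Rightarrow>complex) i::nat.
     if i = 0 then of_real (hpp \<theta> \<eta> c - 2 * V) * x 0 * y 0 + of_real (- 2 * c) * (x 0 * y 1 + x 1 * y 0)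
     else of_real (\<epsilon> * (1 - d) * 2 * V) * x 0 * y 0 + of_real (\<epsilon> * (1 - d) * (2 * c)) * (x 0 * y 1 + x 1 * y 0))"
      unfolding P2d by (rule Bform_field)
    have Cf: "Cform (field \<theta> \<eta> \<epsilon> d) (P2 \<epsilon> d) = (\<lambda>(x::nat\<Rightarrow>complex) (y::nat\<Rightarrow>complex) (z::nat\<Rightarrow>complex) i::nat.
     if i = 0 then of_real (hppp \<theta> \<eta> c) * x 0 * y 0 * z 0 + of_real (- 2) * (x 0 * y 0 * z 1 + x 0 * y 1 * z 0 + x 1 * y 0 * z 0)
     else of_real (\<epsilon> * (1 - d) * 2) * (x 0 * y 0 * z 1 + x 0 * y 1 * z 0 + x 1 * y 0 * z 0))"
      unfolding P2d by (rule Cform_field)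
    have gpos: "\<gamma> > 0"
    proof -
      have "\<gamma> = \<epsilon> * (2 * (1 - d) * (c * V))" unfolding \<gamma>_def by (simp add: algebra_simps)
      then show ?thesis using mult_pos_pos[OF that mult_pos_pos[OF d1 cVpos]] by simp
    qed
    have neg: "-(c^2) * \<gamma> < 0" using cpos2 gpos by (simp add: mult_pos_pos)
    note L = lyap1_eval[OF J Bf Cf neg]
    define s where "s = sqrt (- (- (c^2) * \<gamma>))"
    have spos: "s > 0" unfolding s_def using neg by simp
    have s2: "s^2 > 0" using spos by simp
    have c4: "(- (c^2))^2 \<ge> 0" by simp
    have S: "(- (c^2))^2 + s^2 > 0" using s2 c4 by linarith
    have Bk: "- (c^2) * \<gamma> * hppp \<theta> \<eta> c - - (c^2) * (hpp \<theta> \<eta> c - 2 * V) * (\<epsilon> * (1 - d) * 2 * V)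
         - \<gamma> * (- 2 * c) * (hpp \<theta> \<eta> c - 2 * V)
         + - (c^2) * (\<gamma> * (\<epsilon> * (1 - d) * 2) - \<epsilon> * (1 - d) * (2 * c) * (\<epsilon> * (1 - d) * 2 * V))
       = - \<epsilon> * Acoef \<theta> \<eta>"
      unfolding Aeq \<gamma>_def by (simp add: algebra_simps)
    define K where "K = c^2 * \<epsilon> / (4 * \<gamma> * ((- (c^2))^2 + s^2) * s)"
    have Kp: "K > 0" unfolding K_def using cpos2 that gpos S spos by (intro divide_pos_pos mult_pos_pos) auto
    have "lyap1 (field \<theta> \<eta> \<epsilon> d) (P2 \<epsilon> d) = (- (c^2))^2 * (- \<epsilon> * Acoef \<theta> \<eta>) / (4 * (- (c^2)) * \<gamma> * ((- (c^2))^2 + s^2) * s)"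
      using L unfolding Bk s_def[symmetric] .
    also have "\<dots> = K * Acoef \<theta> \<eta>" unfolding K_def
      by (rule arith2) (use cpos2 gpos S spos in auto)
    finally show ?thesis using Kp by blast
  qed
  have freq: "hopf_freq (field \<theta> \<eta> \<epsilon> d) (P2 \<epsilon> d) = sqrt (\<epsilon> * (c^2 * (2 * (1 - d) * (c * V))))" for \<epsilon>
    unfolding hopf_freq_def jdt ..
  have freqlim: "((\<lambda>\<epsilon>. hopf_freq (field \<theta> \<eta> \<epsilon> d) (P2 \<epsilon> d)) \<longlongrightarrow> 0) (at_right 0)"
  proof -
    have "((\<lambda>\<epsilon>. sqrt (\<epsilon> * (c^2 * (2 * (1 - d) * (c * V))))) \<longlongrightarrow> sqrt (0 * (c^2 * (2 * (1 - d) * (c * V))))) (at_right 0)"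
      by (intro tendsto_intros)
    then show ?thesis unfolding freq by simp
  qed
  have hopf: "hopf_point (\<lambda>\<delta>. field \<theta> \<eta> \<epsilon> \<delta>) (\<lambda>\<delta>. P2 \<epsilon> \<delta>) d" if "\<epsilon> > 0" for \<epsilon>
    unfolding hopf_point_def
  proof (intro conjI)
    show "\<exists>r>0. \<forall>\<mu>. \<bar>\<mu> - d\<bar> < r \<longrightarrow> field \<theta> \<eta> \<epsilon> \<mu> (fst (P2 \<epsilon> \<mu>)) (snd (P2 \<epsilon> \<mu>)) = (0, 0)"
      using \<delta>0pos eqs by blast
    show "jtrace (field \<theta> \<eta> \<epsilon> d) (P2 \<epsilon> d) = 0" by (rule jtr)
    show "jdet (field \<theta> \<eta> \<epsilon> d) (P2 \<epsilon> d) > 0" unfolding jdt using that Kpos by simp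
    show "\<exists>D. D \<noteq> 0 \<and> ((\<lambda>\<mu>. jtrace (field \<theta> \<eta> \<epsilon> \<mu>) (P2 \<epsilon> \<mu>)) has_real_derivative D) (at d)"
      using Dvne dtr by blast
  qed
  show ?thesis
    unfolding c_def[symmetric] V_def[symmetric] d_def[symmetric]
    apply (rule exI[of _ "1::real"])
    apply (rule conjI, simp)
    apply (rule exI[of _ \<delta>0])
    apply (rule conjI, rule \<delta>0pos)
    apply (rule exI[of _ P2], rule exI[of _ "\<lambda>_. d"])
    apply (intro conjI)
    subgoal using eqs by blast
    subgoal by (rule lim)
    subgoal by simp
    subgoal
    proof (intro allI impI)
      fix \<epsilon> :: real
      assume e: "0 < \<epsilon> \<and> \<epsilon> < 1"
      then have ep: "\<epsilon> > 0" by simp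
      obtain K where K: "K > 0" "lyap1 (field \<theta> \<eta> \<epsilon> d) (P2 \<epsilon> d) = K * Acoef \<theta> \<eta>" using lyapK[OF ep] by blast
      have "Acoef \<theta> \<eta> < 0 \<Longrightarrow> K * Acoef \<theta> \<eta> < 0" using K(1) by (simp add: mult_pos_neg)
      moreover have "Acoef \<theta> \<eta> > 0 \<Longrightarrow> K * Acoef \<theta> \<eta> > 0" using K(1) by simp
      ultimately show "\<bar>d - d\<bar> < \<delta>0 \<and> hopf_point (\<lambda>\<delta>. field \<theta> \<eta> \<epsilon> \<delta>) (\<lambda>\<delta>. P2 \<epsilon> \<delta>) d \<and>
         (Acoef \<theta> \<eta> \<noteq> 0 \<longrightarrow> lyap1 (field \<theta> \<eta> \<epsilon> d) (P2 \<epsilon> d) \<noteq> 0) \<and>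
         (Acoef \<theta> \<eta> < 0 \<longrightarrow> lyap1 (field \<theta> \<eta> \<epsilon> d) (P2 \<epsilon> d) < 0) \<and>
         (Acoef \<theta> \<eta> > 0 \<longrightarrow> lyap1 (field \<theta> \<eta> \<epsilon> d) (P2 \<epsilon> d) > 0)"
        using \<delta>0pos hopf[OF ep] K by auto
    qed
    subgoal by (rule freqlim)
    done
qed


end
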